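(* Let $(\mathcal A,\mathcal A_0)$ be an admissible $\mathcal T$-semiring pair and let $S\subseteq\mathcal T$ be a multiplicatively closed subset with $\mathbb 0\notin S$. Put $\hat S=(S\times\{\mathbb 0\})\cup(\{\mathbb 0\}\times S)\subseteq\mathcal A\times\mathcal A$. Then there exists a prime congruence on $\mathcal A$ disjoint from $\hat S$.
   Context: $\mathcal T$ is a multiplicative monoid. An admissible $\mathcal T$-semiring pair $(\mathcal A,\mathcal A_0)$ consists of a semiring $\mathcal A$ containing $\mathcal T$ as a multiplicative submonoid, additively generated by $\mathcal T\cup\{\mathbb 0\}$, and a subset $\mathcal A_0\subseteq\mathcal A$ containing $\mathbb 0$, closed under addition and under multiplication by $\mathcal T$, with $\mathcal A_0\cap\mathcal T=\emptyset$. A congruence on $\mathcal A$ is an equivalence relation on $\mathcal A$ closed (as a subset of $\mathcal A\times\mathcal A$) under componentwise addition and multiplication. The twist product is $(a_1,a_1')\cdot_{tw}(a_2,a_2')=(a_1a_2+a_1'a_2',\ a_1a_2'+a_1'a_2)$; for congruences $\Phi_1,\Phi_2$, $\Phi_1\cdot_{tw}\Phi_2$ is the set of twist products of an element of $\Phi_1$ with an element of $\Phi_2$. A congruence $\Phi$ is prime if for all congruences $\Phi_1,\Phi_2\supseteq\Phi$ with $\Phi_1\cdot_{tw}\Phi_2\subseteq\Phi$ one has $\Phi_1=\Phi$ or $\Phi_2=\Phi$. *)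

theory Defs
  imports Main
begin

text \<open>The semiring \<A> is the whole type 'a (a commutative semiring with 0 and 1).
  \<T> and \<A>0 are subsets of it.\<close>

definition admissible_pair :: "'a::comm_semiring_1 set \<Rightarrow> 'a set \<Rightarrow> bool" where
  "admissible_pair T A0 \<longleftrightarrow>
     \<comment> \<open>\<T> is a multiplicative submonoid\<close>
     1 \<in> T \<and> (\<forall>s\<in>T. \<forall>t\<in>T. s * t \<in> T) \<and>
     \<comment> \<open>\<A> is additively generated by \<T> \<union> {0}\<close>
     (\<forall>a. \<exists>xs. set xs \<subseteq> insert 0 T \<and> a = sum_list xs) \<and>
     \<comment> \<open>conditions on \<A>0\<close>
     0 \<in> A0 \<and> (\<forall>a\<in>A0. \<forall>b\<in>A0. a + b \<in> A0) \<and> (\<forall>t\<in>T. \<forall>a\<in>A0. t * a \<in> A0) \<and>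
     A0 \<inter> T = {}"

definition congruence :: "('a::comm_semiring_1 \<times> 'a) set \<Rightarrow> bool" where
  "congruence \<Phi> \<longleftrightarrow> equiv UNIV \<Phi> \<and>
     (\<forall>a b c d. (a, b) \<in> \<Phi> \<longrightarrow> (c, d) \<in> \<Phi> \<longrightarrow> (a + c, b + d) \<in> \<Phi> \<and> (a * c, b * d) \<in> \<Phi>)"

definition twist :: "'a::comm_semiring_1 \<times> 'a \<Rightarrow> 'a \<times> 'a \<Rightarrow> 'a \<times> 'a" where
  "twist p q = (fst p * fst q + snd p * snd q, fst p * snd q + snd p * fst q)"

definition twist_set :: "('a::comm_semiring_1 \<times> 'a) set \<Rightarrow> ('a \<times> 'a) set \<Rightarrow> ('a \<times> 'a) set" where
  "twist_set \<Phi>1 \<Phi>2 = {twist p q | p q. p \<in> \<Phi>1 \<and> q \<in> \<Phi>2}"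

definition prime_congruence :: "('a::comm_semiring_1 \<times> 'a) set \<Rightarrow> bool" where
  "prime_congruence \<Phi> \<longleftrightarrow> congruence \<Phi> \<and>
     (\<forall>\<Phi>1 \<Phi>2. congruence \<Phi>1 \<longrightarrow> congruence \<Phi>2 \<longrightarrow> \<Phi> \<subseteq> \<Phi>1 \<longrightarrow> \<Phi> \<subseteq> \<Phi>2 \<longrightarrow>
        twist_set \<Phi>1 \<Phi>2 \<subseteq> \<Phi> \<longrightarrow> \<Phi>1 = \<Phi> \<or> \<Phi>2 = \<Phi>)"

definition S_hat :: "'a::comm_semiring_1 set \<Rightarrow> ('a \<times> 'a) set" where
  "S_hat S = (S \<times> {0}) \<union> ({0} \<times> S)"

end

theory Submission
  imports Defs
begin

lemma chain_union_congruence: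
  assumes ne: "C \<noteq> {}" and cg: "\<And>X. X \<in> C \<Longrightarrow> congruence X"
    and ch: "\<And>X Y. X \<in> C \<Longrightarrow> Y \<in> C \<Longrightarrow> X \<subseteq> Y \<or> Y \<subseteq> X"
  shows "congruence (\<Union>C)"
proof -
  from ne obtain X0 where X0: "X0 \<in> C" by blast
  have refl: "refl_on UNIV (\<Union>C)"
    using cg[OF X0] X0 unfolding congruence_def equiv_def refl_on_def by blast
  have sym: "sym (\<Union>C)"
    using cg unfolding congruence_def equiv_def sym_def by blast
  have tr: "trans (\<Union>C)"
  proof (rule transI)
    fix x y z assume "(x,y) \<in> \<Union>C" "(y,z) \<in> \<Union>C"
    then obtain X Y where XY: "X \<in> C" "Y \<in> C" "(x,y) \<in> X" "(y,z) \<in> Y" by blast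
    show "(x,z) \<in> \<Union>C"
    proof (cases "X \<subseteq> Y")
      case True
      with XY cg[OF XY(2)] show ?thesis unfolding congruence_def equiv_def trans_def by blast
    next
      case False
      with ch[OF XY(1,2)] XY cg[OF XY(1)] show ?thesis
        unfolding congruence_def equiv_def trans_def by blast
    qed
  qed
  have comp: "\<forall>a b c d. (a, b) \<in> \<Union>C \<longrightarrow> (c, d) \<in> \<Union>C \<longrightarrow> (a + c, b + d) \<in> \<Union>C \<and> (a * c, b * d) \<in> \<Union>C"
  proof (intro allI impI)
    fix a b c d assume "(a, b) \<in> \<Union>C" "(c, d) \<in> \<Union>C"
    then obtain X Y where XY: "X \<in> C" "Y \<in> C" "(a,b) \<in> X" "(c,d) \<in> Y" by blast
    show "(a + c, b + d) \<in> \<Union>C \<and> (a * c, b * d) \<in> \<Union>C"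
    proof (cases "X \<subseteq> Y")
      case True
      with XY cg[OF XY(2)] show ?thesis unfolding congruence_def by blast
    next
      case False
      with ch[OF XY(1,2)] XY cg[OF XY(1)] show ?thesis
        unfolding congruence_def by blast
    qed
  qed
  show ?thesis unfolding congruence_def equiv_def using refl sym tr comp by simp
qed

theorem mainTheorem6:
  fixes T A0 S :: "'a::comm_semiring_1 set"
  assumes "admissible_pair T A0"
    and "S \<subseteq> T"
    and "\<forall>s\<in>S. \<forall>t\<in>S. s * t \<in> S"
    and "0 \<notin> S"
  shows "\<exists>\<Phi>. prime_congruence \<Phi> \<and> \<Phi> \<inter> S_hat S = {}"
proof -
  define \<A> where "\<A> = {\<Phi>::('a \<times> 'a) set. congruence \<Phi> \<and> \<Phi> \<inter> S_hat S = {}}"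
  have "Id \<in> \<A>"
    using assms(4) unfolding \<A>_def congruence_def S_hat_def equiv_def refl_on_def sym_def trans_def
    by auto
  hence ne: "\<A> \<noteq> {}" by blast
  have "\<exists>M\<in>\<A>. \<forall>X\<in>\<A>. M \<subseteq> X \<longrightarrow> X = M"
  proof (rule subset_Zorn_nonempty[OF ne])
    fix C assume "C \<noteq> {}" "subset.chain \<A> C"
    then have "C \<subseteq> \<A>" "\<And>X Y. X \<in> C \<Longrightarrow> Y \<in> C \<Longrightarrow> X \<subseteq> Y \<or> Y \<subseteq> X"
      by (auto simp: subset_chain_def)
    moreover have "congruence (\<Union>C)"
      by (rule chain_union_congruence[OF \<open>C \<noteq> {}\<close>]) (use calculation in \<open>auto simp: \<A>_def\<close>)
    ultimately show "\<Union>C \<in> \<A>" unfolding \<A>_def by blast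
  qed
  then obtain M where M: "M \<in> \<A>" and max: "\<And>X. X \<in> \<A> \<Longrightarrow> M \<subseteq> X \<Longrightarrow> X = M" by blast
  have cM: "congruence M" and dM: "M \<inter> S_hat S = {}" using M by (auto simp: \<A>_def)
  have "prime_congruence M"
    unfolding prime_congruence_def
  proof (intro conjI cM allI impI)
    fix P1 P2 :: "('a \<times> 'a) set"
    assume c1: "congruence P1" and c2: "congruence P2" and s1: "M \<subseteq> P1" and s2: "M \<subseteq> P2"
      and tw: "twist_set P1 P2 \<subseteq> M"
    show "P1 = M \<or> P2 = M"
    proof (rule ccontr)
      assume "\<not> (P1 = M \<or> P2 = M)"
      hence "P1 \<notin> \<A>" "P2 \<notin> \<A>" using max s1 s2 by auto
      hence "P1 \<inter> S_hat S \<noteq> {}" "P2 \<inter> S_hat S \<noteq> {}" using c1 c2 by (auto simp: \<A>_def)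
      then obtain p q where p: "p \<in> P1" "p \<in> S_hat S" and q: "q \<in> P2" "q \<in> S_hat S" by blast
      have "twist p q \<in> M" using tw p q unfolding twist_set_def by blast
      moreover have "twist p q \<in> S_hat S"
        using p(2) q(2) assms(3) unfolding S_hat_def twist_def by auto
      ultimately show False using dM by blast
    qed
  qed
  thus ?thesis using dM by blast
qed

end
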